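(* Let $\Theta\subset(0,1)\times(0,\infty)$ be compact and convex, let $\theta_0\in\mathrm{Interior}(\Theta)$, and let $Z_1,Z_2,\dots$ be i.i.d. random variables with distribution $\mathrm{GPD}(\theta_0)$. For $k\in\mathbb N$ define $\hat S_k(x)=\frac1k\sum_{j=1}^k\mathbf 1(Z_j>x)$ and \[ J_k(\theta)=\int_0^\infty\big(\hat S_k(x)-S_\theta(x)\big)^2\,\mathrm dx,\qquad \theta\in\Theta . \] Let $\hat\theta_k=\hat\theta_k(Z_1,\dots,Z_k)$ be any sequence of $\Theta$-valued estimators with $J_k(\hat\theta_k)\le J_k(\theta_0)+o_{\mathbb P}(1)$ as $k\to\infty$. Then $\hat\theta_k\to\theta_0$ in probability as $k\to\infty$, and for every $x\ge0$, $S_{\hat\theta_k}(x)\to S_{\theta_0}(x)$ in probability.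
   Context: For $\theta=(\gamma,\sigma)$ with $\gamma\in(0,1)$, $\sigma>0$, $S_\theta(x)=\left(1+\gamma\frac{x}{\sigma}\right)^{-1/\gamma}$, $x\ge0$, is the survival function of the generalized Pareto distribution $\mathrm{GPD}(\theta)$, whose distribution function is $F_\theta=1-S_\theta$. *)

theory Defs
  imports "HOL-Probability.Probability"
begin

text \<open>Survival function of GPD(theta), theta = (gamma, sigma).\<close>
definition GPD_surv :: "real \<times> real \<Rightarrow> real \<Rightarrow> real" where
  "GPD_surv \<theta> x = (1 + fst \<theta> * x / snd \<theta>) powr (- 1 / fst \<theta>)"

definition GPD_cdf :: "real \<times> real \<Rightarrow> real \<Rightarrow> real" where
  "GPD_cdf \<theta> x = (if x < 0 then 0 else 1 - GPD_surv \<theta> x)"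

definition emp_surv :: "(nat \<Rightarrow> 'a \<Rightarrow> real) \<Rightarrow> nat \<Rightarrow> 'a \<Rightarrow> real \<Rightarrow> real" where
  "emp_surv Z k \<omega> x = (\<Sum>j = 1..k. if Z j \<omega> > x then 1 else 0) / real k"

definition J_crit :: "(nat \<Rightarrow> 'a \<Rightarrow> real) \<Rightarrow> nat \<Rightarrow> 'a \<Rightarrow> real \<times> real \<Rightarrow> real" where
  "J_crit Z k \<omega> \<theta> = (LBINT x:{0..}. (emp_surv Z k \<omega> x - GPD_surv \<theta> x)\<^sup>2)"

definition conv_in_prob :: "'a measure \<Rightarrow> (nat \<Rightarrow> 'a \<Rightarrow> 'b::metric_space) \<Rightarrow> 'b \<Rightarrow> bool" where
  "conv_in_prob M X c \<longleftrightarrow>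
     (\<forall>\<epsilon>>0. (\<lambda>k. measure M {\<omega> \<in> space M. dist (X k \<omega>) c > \<epsilon>}) \<longlonglongrightarrow> 0)"

end

theory Submission
  imports Defs
begin

lemma S_bounds:
  assumes "0 < fst \<theta>" "0 < snd \<theta>" "0 \<le> x"
  shows "0 < GPD_surv \<theta> x" "GPD_surv \<theta> x \<le> 1"
proof -
  have b: "1 \<le> 1 + fst \<theta> * x / snd \<theta>" using assms by simp
  show "0 < GPD_surv \<theta> x" unfolding GPD_surv_def using b by simp
  have "(1 + fst \<theta> * x / snd \<theta>) powr (- 1 / fst \<theta>) \<le> 1"
    using powr_mono[of "- 1 / fst \<theta>" 0 "1 + fst \<theta> * x / snd \<theta>"] b assms by simp
  then show "GPD_surv \<theta> x \<le> 1" unfolding GPD_surv_def .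
qed

lemma S_meas[measurable]: "(\<lambda>x. GPD_surv \<theta> x) \<in> borel_measurable borel"
  unfolding GPD_surv_def by measurable

lemma S_nn_integral:
  assumes g: "0 < fst \<theta>" "fst \<theta> < 1" and s: "0 < snd \<theta>"
  shows "(\<integral>\<^sup>+x. ennreal (GPD_surv \<theta> x) * indicator {0..} x \<partial>lborel) = ennreal (snd \<theta> / (1 - fst \<theta>))"
proof -
  define a where "a = fst \<theta>"
  define s where "s = snd \<theta>"
  have a: "0 < a" "a < 1" and s0: "0 < s" using g s by (auto simp: a_def s_def)
  define F where "F x = - (s / (1 - a)) * (1 + a * x / s) powr (1 - 1 / a)" for x
  have "(\<integral>\<^sup>+x. ennreal (GPD_surv \<theta> x) * indicator {0..} x \<partial>lborel) = 0 - F 0"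
  proof (rule nn_integral_FTC_atLeast)
    show "(\<lambda>x. GPD_surv \<theta> x) \<in> borel_measurable borel" by measurable
    fix x :: real assume x: "0 \<le> x"
    have pos: "0 < 1 + a * x / s" using a s0 x by (simp add: add_pos_nonneg)
    have "(F has_real_derivative - (s / (1 - a)) * ((1 - 1 / a) * (1 + a * x / s) powr (1 - 1 / a - real 1) * (a / s))) (at x)"
      unfolding F_def
      using s0 by (intro DERIV_cmult DERIV_fun_powr pos) (auto intro!: derivative_eq_intros)
    moreover have "- (s / (1 - a)) * ((1 - 1 / a) * (1 + a * x / s) powr (1 - 1 / a - real 1) * (a / s))
        = GPD_surv \<theta> x"
      using a s0 unfolding GPD_surv_def a_def[symmetric] s_def[symmetric]
      by (simp add: field_simps)
    ultimately show "(F has_real_derivative GPD_surv \<theta> x) (at x)" by simp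
    show "0 \<le> GPD_surv \<theta> x" using S_bounds(1)[of \<theta> x] g s x by simp
  next
    have "filterlim (\<lambda>x. 1 + a * x / s) at_top at_top"
      using a s0 by real_asymp
    then have "((\<lambda>x. (1 + a * x / s) powr (1 - 1 / a)) \<longlongrightarrow> 0) at_top"
      using a by (intro tendsto_neg_powr) (auto simp: field_simps)
    then show "(F \<longlongrightarrow> 0) at_top" unfolding F_def
      using tendsto_mult_right_zero by blast
  qed
  also have "0 - F 0 = snd \<theta> / (1 - fst \<theta>)" by (simp add: F_def a_def s_def)
  finally show ?thesis by simp
qed

lemma emp_bounds: "0 \<le> emp_surv Z k \<omega> x" "emp_surv Z k \<omega> x \<le> 1"
proof -
  have s: "(\<Sum>j = 1..k. if Z j \<omega> > x then 1 else 0) \<le> (\<Sum>j = 1..k. (1::real))"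
    by (intro sum_mono) auto
  show "0 \<le> emp_surv Z k \<omega> x" unfolding emp_surv_def by (intro divide_nonneg_nonneg sum_nonneg) auto
  show "emp_surv Z k \<omega> x \<le> 1" using s unfolding emp_surv_def
    by (cases "k = 0") (auto simp: divide_simps)
qed

lemma emp_zero:
  assumes "(\<Sum>j = 1..k. \<bar>Z j \<omega>\<bar>) \<le> x"
  shows "emp_surv Z k \<omega> x = 0"
proof -
  have "\<And>j. j \<in> {1..k} \<Longrightarrow> \<not> Z j \<omega> > x"
  proof -
    fix j assume j: "j \<in> {1..k}"
    have "Z j \<omega> \<le> \<bar>Z j \<omega>\<bar>" by simp
    also have "\<bar>Z j \<omega>\<bar> \<le> (\<Sum>j = 1..k. \<bar>Z j \<omega>\<bar>)"
      using j by (intro member_le_sum) auto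
    finally show "\<not> Z j \<omega> > x" using assms by simp
  qed
  then show ?thesis unfolding emp_surv_def by simp
qed

lemma emp_meas_x[measurable]: "(\<lambda>x. emp_surv Z k \<omega> x) \<in> borel_measurable borel"
  unfolding emp_surv_def by measurable

lemma sq_nn_finite:
  assumes g: "0 < fst \<theta>" "fst \<theta> < 1" and s: "0 < snd \<theta>"
  shows "(\<integral>\<^sup>+x. ennreal (indicator {0..} x * (emp_surv Z k \<omega> x - GPD_surv \<theta> x)\<^sup>2) \<partial>lborel) < \<infinity>"
proof -
  define B where "B = (\<Sum>j = 1..k. \<bar>Z j \<omega>\<bar>)"
  have pt: "ennreal (indicator {0..} x * (emp_surv Z k \<omega> x - GPD_surv \<theta> x)\<^sup>2)
      \<le> indicator {0..B} x + ennreal (GPD_surv \<theta> x) * indicator {0..} x" for x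
  proof (cases "0 \<le> x")
    case True
    define e where "e = emp_surv Z k \<omega> x"
    define v where "v = GPD_surv \<theta> x"
    have e: "0 \<le> e" "e \<le> 1" using emp_bounds e_def by auto
    have v: "0 < v" "v \<le> 1" using S_bounds[OF g(1) s True] v_def by auto
    have e2: "e \<le> indicator {0..B} x"
    proof (cases "x \<le> B")
      case True then show ?thesis using e \<open>0 \<le> x\<close> by simp
    next
      case False then have "e = 0" unfolding e_def B_def by (intro emp_zero) simp
      then show ?thesis by simp
    qed
    have "(e - v)\<^sup>2 \<le> e + v"
    proof -
      have "\<bar>e - v\<bar> \<le> 1" using e v by auto
      then have "(e - v)\<^sup>2 \<le> \<bar>e - v\<bar>"
        by (metis abs_ge_zero abs_le_square_iff abs_of_nonneg mult_left_le power2_eq_square power2_abs)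
      also have "\<dots> \<le> e + v" using e v by auto
      finally show ?thesis .
    qed
    also have "\<dots> \<le> indicator {0..B} x + v" using e2 by simp
    finally have "(e - v)\<^sup>2 \<le> indicator {0..B} x + v" .
    then have "ennreal ((e - v)\<^sup>2) \<le> ennreal (indicator {0..B} x + v)" by (rule ennreal_leI)
    also have "\<dots> = ennreal (indicator {0..B} x) + ennreal v" using v by (intro ennreal_plus) auto
    finally show ?thesis using True by (simp add: e_def[symmetric] v_def[symmetric] ennreal_indicator)
  next
    case False then show ?thesis by simp
  qed
  have "(\<integral>\<^sup>+x. ennreal (indicator {0..} x * (emp_surv Z k \<omega> x - GPD_surv \<theta> x)\<^sup>2) \<partial>lborel)
      \<le> (\<integral>\<^sup>+x. indicator {0..B} x + ennreal (GPD_surv \<theta> x) * indicator {0..} x \<partial>lborel)"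
    by (intro nn_integral_mono pt)
  also have "\<dots> = (\<integral>\<^sup>+x. indicator {0..B} x \<partial>lborel) + (\<integral>\<^sup>+x. ennreal (GPD_surv \<theta> x) * indicator {0..} x \<partial>lborel)"
    by (intro nn_integral_add) auto
  also have "\<dots> < \<infinity>"
  proof -
    have "0 \<le> B" unfolding B_def by (simp add: sum_nonneg)
    then show ?thesis using S_nn_integral[OF g s] by (simp add: emeasure_lborel_Icc)
  qed
  finally show ?thesis .
qed

lemma sq_integrable:
  assumes g: "0 < fst \<theta>" "fst \<theta> < 1" and s: "0 < snd \<theta>"
  shows "integrable lborel (\<lambda>x. indicator {0..} x * (emp_surv Z k \<omega> x - GPD_surv \<theta> x)\<^sup>2)"
  using sq_nn_finite[OF g s, of Z k \<omega>]
  by (intro integrableI_nonneg) auto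

lemma J_nn:
  assumes g: "0 < fst \<theta>" "fst \<theta> < 1" and s: "0 < snd \<theta>"
  shows "ennreal (J_crit Z k \<omega> \<theta>) = (\<integral>\<^sup>+x. ennreal (indicator {0..} x * (emp_surv Z k \<omega> x - GPD_surv \<theta> x)\<^sup>2) \<partial>lborel)"
  unfolding J_crit_def set_lebesgue_integral_def
  using nn_integral_eq_integral[OF sq_integrable[OF g s, of Z k \<omega>]] by simp

lemma J_nonneg: "0 \<le> J_crit Z k \<omega> \<theta>"
  unfolding J_crit_def set_lebesgue_integral_def by (intro integral_nonneg_AE) (auto simp: indicator_def)

lemma stepA:
  assumes g: "0 < fst \<theta>" "fst \<theta> < 1" and s: "0 < snd \<theta>"
    and g': "0 < fst \<theta>'" "fst \<theta>' < 1" and s': "0 < snd \<theta>'"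
  shows "(\<integral>\<^sup>+x. ennreal (indicator {0..} x * (GPD_surv \<theta> x - GPD_surv \<theta>' x)\<^sup>2) \<partial>lborel)
    \<le> ennreal (2 * J_crit Z k \<omega> \<theta> + 2 * J_crit Z k \<omega> \<theta>')"
proof -
  let ?e = "\<lambda>x. emp_surv Z k \<omega> x"
  have pt: "ennreal (indicator {0..} x * (GPD_surv \<theta> x - GPD_surv \<theta>' x)\<^sup>2)
     \<le> 2 * ennreal (indicator {0..} x * (?e x - GPD_surv \<theta> x)\<^sup>2) + 2 * ennreal (indicator {0..} x * (?e x - GPD_surv \<theta>' x)\<^sup>2)" for x
  proof -
    have r: "(a - b)\<^sup>2 \<le> 2 * (c - a)\<^sup>2 + 2 * (c - b)\<^sup>2" for a b c :: real
    proof -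
      have "0 \<le> (2 * c - a - b)\<^sup>2" by simp
      then show ?thesis by (simp add: power2_eq_square algebra_simps)
    qed
    have "ennreal (indicator {0..} x * (GPD_surv \<theta> x - GPD_surv \<theta>' x)\<^sup>2)
      \<le> ennreal (2 * (indicator {0..} x * (?e x - GPD_surv \<theta> x)\<^sup>2) + 2 * (indicator {0..} x * (?e x - GPD_surv \<theta>' x)\<^sup>2))"
      using r[of "GPD_surv \<theta> x" "GPD_surv \<theta>' x" "?e x"]
      by (intro ennreal_leI) (auto simp: indicator_def)
    also have "\<dots> = 2 * ennreal (indicator {0..} x * (?e x - GPD_surv \<theta> x)\<^sup>2) + 2 * ennreal (indicator {0..} x * (?e x - GPD_surv \<theta>' x)\<^sup>2)"
      by (simp add: ennreal_plus ennreal_mult)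
    finally show ?thesis .
  qed
  have "(\<integral>\<^sup>+x. ennreal (indicator {0..} x * (GPD_surv \<theta> x - GPD_surv \<theta>' x)\<^sup>2) \<partial>lborel)
     \<le> (\<integral>\<^sup>+x. 2 * ennreal (indicator {0..} x * (?e x - GPD_surv \<theta> x)\<^sup>2) + 2 * ennreal (indicator {0..} x * (?e x - GPD_surv \<theta>' x)\<^sup>2) \<partial>lborel)"
    by (intro nn_integral_mono pt)
  also have "\<dots> = 2 * (\<integral>\<^sup>+x. ennreal (indicator {0..} x * (?e x - GPD_surv \<theta> x)\<^sup>2) \<partial>lborel)
      + 2 * (\<integral>\<^sup>+x. ennreal (indicator {0..} x * (?e x - GPD_surv \<theta>' x)\<^sup>2) \<partial>lborel)"
    by (simp add: nn_integral_add nn_integral_cmult)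
  also have "\<dots> = 2 * ennreal (J_crit Z k \<omega> \<theta>) + 2 * ennreal (J_crit Z k \<omega> \<theta>')"
    using J_nn[OF g s, of Z k \<omega>, symmetric] J_nn[OF g' s', of Z k \<omega>, symmetric] by simp
  also have "\<dots> = ennreal (2 * J_crit Z k \<omega> \<theta> + 2 * J_crit Z k \<omega> \<theta>')"
    using J_nonneg[of Z k \<omega> \<theta>] J_nonneg[of Z k \<omega> \<theta>'] by (simp add: ennreal_plus ennreal_mult)
  finally show ?thesis .
qed

lemma gpd_inj:
  assumes a: "0 < fst a" "0 < snd a" and b: "0 < fst b" "0 < snd b"
    and eq: "\<And>x. 0 < x \<Longrightarrow> GPD_surv a x = GPD_surv b x"
  shows "a = b"
proof -
  define f where "f c x = - (1 / fst c) * ln (1 + fst c * x / snd c)" for c :: "real \<times> real" and x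
  have lnS: "ln (GPD_surv c x) = f c x" if "0 < fst c" "0 < snd c" "0 < x" for c x
  proof -
    have "0 < 1 + fst c * x / snd c" using that by (simp add: add_pos_nonneg)
    then show ?thesis unfolding GPD_surv_def f_def by (simp add: ln_powr)
  qed
  have fe: "f a x = f b x" if "0 < x" for x
    using lnS[OF a that] lnS[OF b that] eq[OF that] by simp
  have der: "(f c has_real_derivative - 1 / (snd c + fst c * x)) (at x)"
    if c: "0 < fst c" "0 < snd c" and x: "0 < x" for c x
  proof -
    have pos: "0 < 1 + fst c * x / snd c" using c x by (simp add: add_pos_nonneg)
    have "(f c has_real_derivative - (1 / fst c) * ((fst c / snd c) / (1 + fst c * x / snd c))) (at x)"
      unfolding f_def using pos c by (auto intro!: derivative_eq_intros)
    moreover have "- (1 / fst c) * ((fst c / snd c) / (1 + fst c * x / snd c)) = - 1 / (snd c + fst c * x)"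
      using c x pos by (simp add: field_simps)
    ultimately show ?thesis by simp
  qed
  have deq: "snd a + fst a * x = snd b + fst b * x" if x: "0 < x" for x
  proof -
    have "(f b has_real_derivative - 1 / (snd a + fst a * x)) (at x)"
      by (rule has_field_derivative_transform_within_open[OF der[OF a x], of "{0<..}"])
         (use x fe in auto)
    then have "- 1 / (snd a + fst a * x) = - 1 / (snd b + fst b * x)"
      using der[OF b x] by (rule DERIV_unique)
    moreover have "0 < snd a + fst a * x" "0 < snd b + fst b * x" using a b x by (auto simp: add_pos_pos)
    ultimately show ?thesis by (simp add: field_simps)
  qed
  have 1: "snd a + fst a = snd b + fst b" using deq[of 1] by simp
  have 2: "snd a + fst a * 2 = snd b + fst b * 2" using deq[of 2] by simp
  have "fst a = fst b" "snd a = snd b" using 1 2 by linarith+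
  then show ?thesis by (simp add: prod_eq_iff)
qed

lemma S_tendsto:
  assumes t: "(t \<longlongrightarrow> l) F" and l: "0 < fst l" "0 < snd l" and x: "0 \<le> x"
  shows "((\<lambda>n. GPD_surv (t n) x) \<longlongrightarrow> GPD_surv l x) F"
proof -
  have "0 < 1 + fst l * x / snd l" using l x by (simp add: add_pos_nonneg)
  then show ?thesis unfolding GPD_surv_def using l
    by (intro tendsto_intros t) auto
qed

lemma S_isCont_x:
  assumes l: "0 < fst l" "0 < snd l" and x: "0 < x"
  shows "isCont (\<lambda>x. GPD_surv l x) x"
proof -
  have "0 < 1 + fst l * x / snd l" using l x by (simp add: add_pos_nonneg)
  then show ?thesis unfolding GPD_surv_def isCont_def using l
    by (intro tendsto_intros) auto
qed

lemma ae_cont_zero: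
  fixes u :: "real \<Rightarrow> real"
  assumes ae: "AE x in lborel. 0 \<le> x \<longrightarrow> u x = 0"
    and c: "\<And>x. 0 < x \<Longrightarrow> isCont u x" and x0: "0 < x0"
  shows "u x0 = 0"
proof (rule ccontr)
  assume ne: "u x0 \<noteq> 0"
  then have "0 < \<bar>u x0\<bar>" by simp
  with c[OF x0] obtain d where d: "0 < d" "\<And>y. dist y x0 < d \<Longrightarrow> dist (u y) (u x0) < \<bar>u x0\<bar>"
    unfolding continuous_at_eps_delta by blast
  define d' where "d' = min d x0"
  have d': "0 < d'" "d' \<le> d" "d' \<le> x0" using d x0 by (auto simp: d'_def)
  from ae obtain N where N: "{x \<in> space lborel. \<not> (0 \<le> x \<longrightarrow> u x = 0)} \<subseteq> N" "emeasure lborel N = 0" "N \<in> sets lborel"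
    by (rule AE_E)
  have sub: "{x0 - d'<..<x0 + d'} \<subseteq> N"
  proof
    fix y assume y: "y \<in> {x0 - d'<..<x0 + d'}"
    then have "dist y x0 < d" using d' by (auto simp: dist_real_def)
    then have "dist (u y) (u x0) < \<bar>u x0\<bar>" by (rule d)
    then have "u y \<noteq> 0" by (auto simp: dist_real_def)
    moreover have "0 \<le> y" using y d' by auto
    ultimately show "y \<in> N" using N(1) by auto
  qed
  have "emeasure lborel {x0 - d'<..<x0 + d'} \<le> emeasure lborel N"
    by (rule emeasure_mono[OF sub N(3)])
  then show False using N(2) d' by simp
qed

definition hdist :: "real \<times> real \<Rightarrow> real \<times> real \<Rightarrow> ennreal" where
  "hdist \<theta> \<theta>0 = (\<integral>\<^sup>+x. ennreal (indicator {0..} x * (GPD_surv \<theta> x - GPD_surv \<theta>0 x)\<^sup>2) \<partial>lborel)"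

lemma ident:
  assumes cpt: "compact \<Theta>" and sub: "\<Theta> \<subseteq> {0<..<1} \<times> {0<..}" and t0: "\<theta>0 \<in> \<Theta>" and e: "0 < \<epsilon>"
  shows "\<exists>\<eta>>0. \<forall>\<theta>\<in>\<Theta>. \<epsilon> \<le> dist \<theta> \<theta>0 \<longrightarrow> ennreal \<eta> \<le> hdist \<theta> \<theta>0"
proof (rule ccontr)
  assume "\<not> ?thesis"
  then have "\<forall>n. \<exists>\<theta>\<in>\<Theta>. \<epsilon> \<le> dist \<theta> \<theta>0 \<and> hdist \<theta> \<theta>0 < ennreal (inverse (real (Suc n)))"
    by (auto simp: not_le)
  then obtain T where T: "\<And>n. T n \<in> \<Theta>" "\<And>n. \<epsilon> \<le> dist (T n) \<theta>0"
      "\<And>n. hdist (T n) \<theta>0 < ennreal (inverse (real (Suc n)))"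
    by metis
  obtain l r where l: "l \<in> \<Theta>" and r: "strict_mono r" and lim: "(T \<circ> r) \<longlonglongrightarrow> l"
    using compact_imp_seq_compact[OF cpt] T(1) unfolding seq_compact_def by metis
  define t where "t = T \<circ> r"
  have tl: "t \<longlonglongrightarrow> l" using lim t_def by simp
  have lpos: "0 < fst l" "fst l < 1" "0 < snd l" using l sub by auto
  have t0pos: "0 < fst \<theta>0" "0 < snd \<theta>0" using t0 sub by auto
  have dl: "\<epsilon> \<le> dist l \<theta>0"
  proof (rule LIMSEQ_le_const)
    show "(\<lambda>n. dist (t n) \<theta>0) \<longlonglongrightarrow> dist l \<theta>0" by (intro tendsto_intros tl)
    show "\<exists>N. \<forall>n\<ge>N. \<epsilon> \<le> dist (t n) \<theta>0" using T(2) by (auto simp: t_def)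
  qed
  have hlim: "(\<lambda>n. hdist (t n) \<theta>0) \<longlonglongrightarrow> 0"
  proof (rule tendsto_sandwich[of "\<lambda>n. 0" _ _ "\<lambda>n. ennreal (inverse (real (Suc n)))"])
    show "\<forall>\<^sub>F n in sequentially. 0 \<le> hdist (t n) \<theta>0" by simp
    show "\<forall>\<^sub>F n in sequentially. hdist (t n) \<theta>0 \<le> ennreal (inverse (real (Suc n)))"
    proof (intro always_eventually allI)
      fix n
      have "hdist (t n) \<theta>0 \<le> ennreal (inverse (real (Suc (r n))))"
        using T(3)[of "r n"] by (simp add: t_def)
      also have "\<dots> \<le> ennreal (inverse (real (Suc n)))"
        using seq_suble[OF r, of n] by (intro ennreal_leI) (simp add: field_simps)
      finally show "hdist (t n) \<theta>0 \<le> ennreal (inverse (real (Suc n)))" .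
    qed
    show "(\<lambda>n. 0::ennreal) \<longlonglongrightarrow> 0" by simp
    show "(\<lambda>n. ennreal (inverse (real (Suc n)))) \<longlonglongrightarrow> 0"
      using tendsto_ennrealI[OF LIMSEQ_inverse_real_of_nat] by simp
  qed
  define u where "u n x = ennreal (indicator {0..} x * (GPD_surv (t n) x - GPD_surv \<theta>0 x)\<^sup>2)" for n x
  have pw: "liminf (\<lambda>n. u n x) = ennreal (indicator {0..} x * (GPD_surv l x - GPD_surv \<theta>0 x)\<^sup>2)" for x
  proof (rule lim_imp_Liminf)
    show "(sequentially :: nat filter) \<noteq> bot" by simp
    show "(\<lambda>n. u n x) \<longlonglongrightarrow> ennreal (indicator {0..} x * (GPD_surv l x - GPD_surv \<theta>0 x)\<^sup>2)"
    proof (cases "0 \<le> x")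
      case True
      then show ?thesis unfolding u_def
        by (intro tendsto_ennrealI tendsto_intros S_tendsto[OF tl lpos(1) lpos(3)])
    next
      case False then show ?thesis by (simp add: u_def)
    qed
  qed
  have "hdist l \<theta>0 = (\<integral>\<^sup>+x. liminf (\<lambda>n. u n x) \<partial>lborel)"
    unfolding hdist_def pw ..
  also have "\<dots> \<le> liminf (\<lambda>n. integral\<^sup>N lborel (u n))"
    by (rule nn_integral_liminf) (simp add: u_def)
  also have "liminf (\<lambda>n. integral\<^sup>N lborel (u n)) = 0"
    using lim_imp_Liminf[OF _ hlim] by (simp add: u_def[abs_def] hdist_def)
  finally have h0: "hdist l \<theta>0 = 0" by simp
  then have "AE x in lborel. ennreal (indicator {0..} x * (GPD_surv l x - GPD_surv \<theta>0 x)\<^sup>2) = 0"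
    unfolding hdist_def by (subst (asm) nn_integral_0_iff_AE) auto
  then have ae: "AE x in lborel. 0 \<le> x \<longrightarrow> GPD_surv l x - GPD_surv \<theta>0 x = 0"
    by eventually_elim (auto simp: ennreal_eq_0_iff)
  have "GPD_surv l x - GPD_surv \<theta>0 x = 0" if x: "0 < x" for x
    by (rule ae_cont_zero[OF ae _ x]) (intro continuous_intros S_isCont_x lpos(1) lpos(3) t0pos; simp)
  then have "l = \<theta>0" by (intro gpd_inj lpos(1) lpos(3) t0pos) auto
  then show False using dl e by simp
qed

lemma var_bound:
  assumes M: "prob_space M"
    and indep: "prob_space.indep_vars M (\<lambda>_. borel) Z {1..}"
    and distr: "\<And>j x. j \<ge> 1 \<Longrightarrow> measure M {\<omega> \<in> space M. Z j \<omega> \<le> x} = GPD_cdf \<theta>0 x"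
    and t0: "0 < fst \<theta>0" "0 < snd \<theta>0"
    and k: "1 \<le> k" and x: "0 \<le> x"
  shows "(\<integral>\<^sup>+\<omega>. ennreal ((emp_surv Z k \<omega> x - GPD_surv \<theta>0 x)\<^sup>2) \<partial>M) \<le> ennreal (GPD_surv \<theta>0 x / real k)"
proof -
  interpret prob_space M by (rule M)
  define p where "p = GPD_surv \<theta>0 x"
  have Zm: "random_variable borel (Z j)" if "j \<ge> 1" for j
    using indep that unfolding indep_vars_def2 by auto
  have ind: "indep_sets (\<lambda>i. { Z i -` A \<inter> space M | A. A \<in> sets borel}) {1..}"
    using indep unfolding indep_vars_def2 by auto
  define A where "A j = Z j -` {x<..} \<inter> space M" for j
  have Aev: "A j \<in> events" if "j \<ge> 1" for j
    using Zm[OF that] unfolding A_def by measurable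
  have pA: "prob (A j) = p" if j: "j \<ge> 1" for j
  proof -
    have "A j = space M - {\<omega> \<in> space M. Z j \<omega> \<le> x}" unfolding A_def by auto
    moreover have "{\<omega> \<in> space M. Z j \<omega> \<le> x} \<in> events" using Zm[OF j] by measurable
    ultimately have "prob (A j) = 1 - prob {\<omega> \<in> space M. Z j \<omega> \<le> x}" by (simp add: prob_compl)
    then show ?thesis using distr[OF j, of x] x by (simp add: GPD_cdf_def p_def)
  qed
  have pAA: "prob (A i \<inter> A j) = p\<^sup>2" if "i \<ge> 1" "j \<ge> 1" "i \<noteq> j" for i j
  proof -
    have "prob (\<Inter>l\<in>{i,j}. A l) = (\<Prod>l\<in>{i,j}. prob (A l))"
      using that by (intro indep_setsD[OF ind]) (auto simp: A_def intro!: exI[of _ "{x<..}"])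
    then show ?thesis using that pA by (simp add: power2_eq_square)
  qed
  define Y where "Y j \<omega> = indicator (A j) \<omega> - p" for j \<omega>
  have Yint: "integrable M (\<lambda>\<omega>. Y i \<omega> * Y j \<omega>)" and
       EY: "(\<integral>\<omega>. Y i \<omega> * Y j \<omega> \<partial>M) = (if i = j then p - p\<^sup>2 else 0)"
    if ij: "i \<in> {1..k}" "j \<in> {1..k}" for i j
  proof -
    have e: "(\<lambda>\<omega>. Y i \<omega> * Y j \<omega>) = (\<lambda>\<omega>. indicator (A i \<inter> A j) \<omega> - p * indicator (A i) \<omega> - p * indicator (A j) \<omega> + p\<^sup>2)"
      by (auto simp: Y_def fun_eq_iff indicator_def power2_eq_square algebra_simps)
    have ev: "A i \<in> events" "A j \<in> events" "A i \<inter> A j \<in> events" using Aev ij by auto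
    show "integrable M (\<lambda>\<omega>. Y i \<omega> * Y j \<omega>)" unfolding e using ev
      by (intro Bochner_Integration.integrable_add Bochner_Integration.integrable_diff integrable_mult_right integrable_real_indicator) (auto simp: emeasure_eq_measure)
    have "(\<integral>\<omega>. Y i \<omega> * Y j \<omega> \<partial>M) = prob (A i \<inter> A j) - p * prob (A i) - p * prob (A j) + p\<^sup>2"
    proof -
      have i1: "integrable M (indicator (A i \<inter> A j) :: 'a \<Rightarrow> real)" "integrable M (indicator (A i) :: 'a \<Rightarrow> real)"
        "integrable M (indicator (A j) :: 'a \<Rightarrow> real)" using ev by (auto simp: emeasure_eq_measure)
      have "(\<integral>\<omega>. indicator (A i \<inter> A j) \<omega> - p * indicator (A i) \<omega> - p * indicator (A j) \<omega> + p\<^sup>2 \<partial>M)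
          = (\<integral>\<omega>. indicator (A i \<inter> A j) \<omega> - p * indicator (A i) \<omega> - p * indicator (A j) \<omega> \<partial>M) + p\<^sup>2"
        using i1 by (subst Bochner_Integration.integral_add) (auto simp: prob_space)
      also have "(\<integral>\<omega>. indicator (A i \<inter> A j) \<omega> - p * indicator (A i) \<omega> - p * indicator (A j) \<omega> \<partial>M)
          = (\<integral>\<omega>. indicator (A i \<inter> A j) \<omega> - p * indicator (A i) \<omega> \<partial>M) - (\<integral>\<omega>. p * indicator (A j) \<omega> \<partial>M)"
        using i1 by (subst Bochner_Integration.integral_diff) auto
      also have "(\<integral>\<omega>. indicator (A i \<inter> A j) \<omega> - p * indicator (A i) \<omega> \<partial>M)
          = (\<integral>\<omega>. indicator (A i \<inter> A j) \<omega> \<partial>M) - (\<integral>\<omega>. p * indicator (A i) \<omega> \<partial>M)"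
        using i1 by (subst Bochner_Integration.integral_diff) auto
      finally show ?thesis using ev unfolding e by (simp add: Int_absorb2 sets.sets_into_space)
    qed
    then show "(\<integral>\<omega>. Y i \<omega> * Y j \<omega> \<partial>M) = (if i = j then p - p\<^sup>2 else 0)"
      using ij pA pAA by (auto simp: power2_eq_square)
  qed
  have kk: "real k > 0" using k by simp
  have rep: "(emp_surv Z k \<omega> x - p)\<^sup>2 = (\<Sum>i\<in>{1..k}. \<Sum>j\<in>{1..k}. Y i \<omega> * Y j \<omega>) / (real k)\<^sup>2"
    if \<omega>: "\<omega> \<in> space M" for \<omega>
  proof -
    have "emp_surv Z k \<omega> x - p = (\<Sum>j\<in>{1..k}. Y j \<omega>) / real k"
    proof -
      have "(\<Sum>j\<in>{1..k}. Y j \<omega>) = (\<Sum>j\<in>{1..k}. indicator (A j) \<omega>) - real k * p"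
        unfolding Y_def by (simp add: sum_subtractf)
      also have "(\<Sum>j\<in>{1..k}. indicator (A j) \<omega>) = (\<Sum>j = 1..k. if Z j \<omega> > x then 1 else 0 :: real)"
        using \<omega> by (intro sum.cong) (auto simp: A_def indicator_def)
      finally show ?thesis using kk unfolding emp_surv_def by (simp add: field_simps)
    qed
    then show ?thesis by (simp add: power2_eq_square sum_product power_divide)
  qed
  have "(\<integral>\<^sup>+\<omega>. ennreal ((emp_surv Z k \<omega> x - p)\<^sup>2) \<partial>M)
      = (\<integral>\<^sup>+\<omega>. ennreal ((\<Sum>i\<in>{1..k}. \<Sum>j\<in>{1..k}. Y i \<omega> * Y j \<omega>) / (real k)\<^sup>2) \<partial>M)"
    by (intro nn_integral_cong) (simp add: rep)
  also have "\<dots> = ennreal (\<integral>\<omega>. (\<Sum>i\<in>{1..k}. \<Sum>j\<in>{1..k}. Y i \<omega> * Y j \<omega>) / (real k)\<^sup>2 \<partial>M)"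
  proof (rule nn_integral_eq_integral)
    show "integrable M (\<lambda>\<omega>. (\<Sum>i\<in>{1..k}. \<Sum>j\<in>{1..k}. Y i \<omega> * Y j \<omega>) / (real k)\<^sup>2)"
      using Yint by (intro integrable_divide Bochner_Integration.integrable_sum) auto
    show "AE \<omega> in M. 0 \<le> (\<Sum>i\<in>{1..k}. \<Sum>j\<in>{1..k}. Y i \<omega> * Y j \<omega>) / (real k)\<^sup>2"
      using rep by (intro AE_I2) (metis zero_le_power2)
  qed
  also have "(\<integral>\<omega>. (\<Sum>i\<in>{1..k}. \<Sum>j\<in>{1..k}. Y i \<omega> * Y j \<omega>) / (real k)\<^sup>2 \<partial>M)
      = (\<Sum>i\<in>{1..k}. \<Sum>j\<in>{1..k}. (\<integral>\<omega>. Y i \<omega> * Y j \<omega> \<partial>M)) / (real k)\<^sup>2"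
  proof -
    have "(\<integral>\<omega>. (\<Sum>i\<in>{1..k}. \<Sum>j\<in>{1..k}. Y i \<omega> * Y j \<omega>) \<partial>M)
        = (\<Sum>i\<in>{1..k}. (\<integral>\<omega>. (\<Sum>j\<in>{1..k}. Y i \<omega> * Y j \<omega>) \<partial>M))"
      using Yint by (intro Bochner_Integration.integral_sum Bochner_Integration.integrable_sum) auto
    also have "\<dots> = (\<Sum>i\<in>{1..k}. \<Sum>j\<in>{1..k}. (\<integral>\<omega>. Y i \<omega> * Y j \<omega> \<partial>M))"
      using Yint by (intro sum.cong refl Bochner_Integration.integral_sum) auto
    finally show ?thesis by simp
  qed
  also have "\<dots> = (\<Sum>i\<in>{1..k}. p - p\<^sup>2) / (real k)\<^sup>2"
  proof (intro arg_cong2[where f="(/)"] refl sum.cong)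
    fix i assume i: "i \<in> {1..k}"
    have "(\<Sum>j\<in>{1..k}. (\<integral>\<omega>. Y i \<omega> * Y j \<omega> \<partial>M)) = (\<Sum>j\<in>{1..k}. if i = j then p - p\<^sup>2 else 0)"
      using EY i by (intro sum.cong) auto
    also have "\<dots> = p - p\<^sup>2" using i by (simp add: sum.delta sum.delta')
    finally show "(\<Sum>j\<in>{1..k}. (\<integral>\<omega>. Y i \<omega> * Y j \<omega> \<partial>M)) = p - p\<^sup>2" .
  qed
  also have "\<dots> = (p - p\<^sup>2) / real k"
    using kk by (simp add: power2_eq_square)
  also have "ennreal \<dots> \<le> ennreal (p / real k)"
    using kk by (intro ennreal_leI divide_right_mono) auto
  finally show ?thesis by (simp add: p_def)
qed

definition Gk :: "(nat \<Rightarrow> 'a \<Rightarrow> real) \<Rightarrow> real \<times> real \<Rightarrow> nat \<Rightarrow> 'a \<Rightarrow> ennreal" where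
  "Gk Z \<theta>0 k \<omega> = (\<integral>\<^sup>+x. ennreal (indicator {0..} x * (emp_surv Z k \<omega> x - GPD_surv \<theta>0 x)\<^sup>2) \<partial>lborel)"

lemma joint_meas:
  assumes Zm: "\<And>j. j \<ge> 1 \<Longrightarrow> Z j \<in> borel_measurable M"
  shows "(\<lambda>(\<omega>, x). ennreal (indicator {0..} x * (emp_surv Z k \<omega> x - GPD_surv \<theta>0 x)\<^sup>2)) \<in> borel_measurable (M \<Otimes>\<^sub>M lborel)"
proof -
  have s: "(\<lambda>(\<omega>, x). (\<Sum>j = 1..k. if Z j \<omega> > x then 1 else 0 :: real)) \<in> borel_measurable (M \<Otimes>\<^sub>M lborel)"
    unfolding split_beta'
  proof (intro borel_measurable_sum)
    fix j assume "j \<in> {1..k}"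
    then have [measurable]: "Z j \<in> borel_measurable M" using Zm by auto
    show "(\<lambda>y. if Z j (fst y) > snd y then 1 else 0 :: real) \<in> borel_measurable (M \<Otimes>\<^sub>M lborel)"
      by measurable
  qed
  have [measurable]: "(\<lambda>y. emp_surv Z k (fst y) (snd y)) \<in> borel_measurable (M \<Otimes>\<^sub>M lborel)"
    unfolding emp_surv_def using s unfolding split_beta' by measurable
  show ?thesis unfolding split_beta' by measurable
qed

lemma G_expect:
  assumes M: "prob_space M"
    and indep: "prob_space.indep_vars M (\<lambda>_. borel) Z {1..}"
    and distr: "\<And>j x. j \<ge> 1 \<Longrightarrow> measure M {\<omega> \<in> space M. Z j \<omega> \<le> x} = GPD_cdf \<theta>0 x"
    and t0: "0 < fst \<theta>0" "fst \<theta>0 < 1" "0 < snd \<theta>0"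
    and k: "1 \<le> k"
  shows "(\<integral>\<^sup>+\<omega>. Gk Z \<theta>0 k \<omega> \<partial>M) \<le> ennreal (snd \<theta>0 / (1 - fst \<theta>0) / real k)"
proof -
  interpret prob_space M by (rule M)
  interpret pair_sigma_finite M lborel
    by (simp add: pair_sigma_finite_def prob_space_imp_sigma_finite[OF M] lborel.sigma_finite_measure_axioms)
  have Zm: "Z j \<in> borel_measurable M" if "j \<ge> 1" for j
    using indep that unfolding indep_vars_def2 by auto
  have "(\<integral>\<^sup>+\<omega>. Gk Z \<theta>0 k \<omega> \<partial>M)
     = (\<integral>\<^sup>+x. (\<integral>\<^sup>+\<omega>. ennreal (indicator {0..} x * (emp_surv Z k \<omega> x - GPD_surv \<theta>0 x)\<^sup>2) \<partial>M) \<partial>lborel)"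
    unfolding Gk_def
    by (rule Fubini'[symmetric]) (rule joint_meas[OF Zm])
  also have "\<dots> \<le> (\<integral>\<^sup>+x. ennreal (1 / real k) * (ennreal (GPD_surv \<theta>0 x) * indicator {0..} x) \<partial>lborel)"
  proof (intro nn_integral_mono)
    fix x :: real
    show "(\<integral>\<^sup>+\<omega>. ennreal (indicator {0..} x * (emp_surv Z k \<omega> x - GPD_surv \<theta>0 x)\<^sup>2) \<partial>M)
      \<le> ennreal (1 / real k) * (ennreal (GPD_surv \<theta>0 x) * indicator {0..} x)"
    proof (cases "0 \<le> x")
      case True
      have "(\<integral>\<^sup>+\<omega>. ennreal (indicator {0..} x * (emp_surv Z k \<omega> x - GPD_surv \<theta>0 x)\<^sup>2) \<partial>M)
          = (\<integral>\<^sup>+\<omega>. ennreal ((emp_surv Z k \<omega> x - GPD_surv \<theta>0 x)\<^sup>2) \<partial>M)" using True by simp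
      also have "\<dots> \<le> ennreal (GPD_surv \<theta>0 x / real k)"
        by (rule var_bound[OF M indep distr t0(1) t0(3) k True])
      also have "\<dots> = ennreal (1 / real k) * (ennreal (GPD_surv \<theta>0 x) * indicator {0..} x)"
        using True S_bounds(1)[OF t0(1) t0(3) True] by (simp add: ennreal_mult[symmetric])
      finally show ?thesis .
    next
      case False then show ?thesis by simp
    qed
  qed
  also have "\<dots> = ennreal (1 / real k) * ennreal (snd \<theta>0 / (1 - fst \<theta>0))"
    by (simp add: nn_integral_cmult S_nn_integral[OF t0])
  also have "\<dots> = ennreal (snd \<theta>0 / (1 - fst \<theta>0) / real k)"
    using t0 by (simp add: ennreal_mult[symmetric])
  finally show ?thesis .
qed

lemma G_meas:
  assumes Zm: "\<And>j. j \<ge> 1 \<Longrightarrow> Z j \<in> borel_measurable M"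
  shows "Gk Z \<theta>0 k \<in> borel_measurable M"
proof -
  have "(\<lambda>\<omega>. \<integral>\<^sup>+y. (\<lambda>(\<omega>, x). ennreal (indicator {0..} x * (emp_surv Z k \<omega> x - GPD_surv \<theta>0 x)\<^sup>2)) (\<omega>, y) \<partial>lborel) \<in> borel_measurable M"
    by (rule lborel.borel_measurable_nn_integral_fst[OF joint_meas[OF Zm]])
  then show ?thesis by (simp add: Gk_def[abs_def])
qed

lemma G_prob:
  assumes M: "prob_space M"
    and indep: "prob_space.indep_vars M (\<lambda>_. borel) Z {1..}"
    and distr: "\<And>j x. j \<ge> 1 \<Longrightarrow> measure M {\<omega> \<in> space M. Z j \<omega> \<le> x} = GPD_cdf \<theta>0 x"
    and t0: "0 < fst \<theta>0" "fst \<theta>0 < 1" "0 < snd \<theta>0"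
    and c: "0 < c"
  shows "(\<lambda>k. measure M {\<omega> \<in> space M. ennreal c \<le> Gk Z \<theta>0 k \<omega>}) \<longlonglongrightarrow> 0"
proof -
  interpret prob_space M by (rule M)
  have Zm: "Z j \<in> borel_measurable M" if "j \<ge> 1" for j
    using indep that unfolding indep_vars_def2 by auto
  define C where "C = snd \<theta>0 / (1 - fst \<theta>0)"
  have bound: "measure M {\<omega> \<in> space M. ennreal c \<le> Gk Z \<theta>0 k \<omega>} \<le> C / c / real k" if k: "1 \<le> k" for k
  proof -
    define S where "S = {\<omega> \<in> space M. ennreal c \<le> Gk Z \<theta>0 k \<omega>}"
    have Sm: "S \<in> events" unfolding S_def using G_meas[OF Zm] by measurable
    have "ennreal c * emeasure M S = (\<integral>\<^sup>+\<omega>. ennreal c * indicator S \<omega> \<partial>M)"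
      using Sm by (simp add: nn_integral_cmult_indicator)
    also have "\<dots> \<le> (\<integral>\<^sup>+\<omega>. Gk Z \<theta>0 k \<omega> \<partial>M)"
      by (intro nn_integral_mono) (auto simp: S_def indicator_def)
    also have "\<dots> \<le> ennreal (C / real k)"
      unfolding C_def by (rule G_expect[OF M indep distr t0 k])
    finally have "ennreal (c * measure M S) \<le> ennreal (C / real k)"
      using c by (simp add: emeasure_eq_measure ennreal_mult)
    then have "c * measure M S \<le> C / real k"
      using t0 k by (subst (asm) ennreal_le_iff) (auto simp: C_def)
    moreover have "0 < real k" using k by simp
    ultimately show ?thesis using c unfolding S_def by (simp add: field_simps)
  qed
  show ?thesis
  proof (rule tendsto_sandwich[of "\<lambda>k. 0" _ _ "\<lambda>k. C / c / real k"])
    show "\<forall>\<^sub>F k in sequentially. 0 \<le> measure M {\<omega> \<in> space M. ennreal c \<le> Gk Z \<theta>0 k \<omega>}" by simp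
    show "\<forall>\<^sub>F k in sequentially. measure M {\<omega> \<in> space M. ennreal c \<le> Gk Z \<theta>0 k \<omega>} \<le> C / c / real k"
      using eventually_ge_at_top[of "1::nat"] by eventually_elim (rule bound)
    show "(\<lambda>k. 0::real) \<longlonglongrightarrow> 0" by simp
    show "(\<lambda>k. C / c / real k) \<longlonglongrightarrow> 0" by real_asymp
  qed
qed

lemma meas_le:
  assumes "prob_space M" "A \<subseteq> B" "B \<in> sets M"
  shows "measure M A \<le> measure M B"
proof (cases "A \<in> sets M")
  case True
  interpret prob_space M by fact
  show ?thesis using True assms by (intro finite_measure_mono) auto
next
  case False then show ?thesis by (simp add: measure_notin_sets)
qed

theorem theorem1:
  fixes M :: "'a measure"
    and \<Theta> :: "(real \<times> real) set"
    and \<theta>0 :: "real \<times> real"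
    and Z :: "nat \<Rightarrow> 'a \<Rightarrow> real"
    and est :: "nat \<Rightarrow> real list \<Rightarrow> real \<times> real"
    and \<theta>hat :: "nat \<Rightarrow> 'a \<Rightarrow> real \<times> real"
  assumes M: "prob_space M"
    and \<Theta>_compact: "compact \<Theta>"
    and \<Theta>_convex: "convex \<Theta>"
    and \<Theta>_sub: "\<Theta> \<subseteq> {0<..<1} \<times> {0<..}"
    and \<theta>0_int: "\<theta>0 \<in> interior \<Theta>"
    and indep: "prob_space.indep_vars M (\<lambda>_. borel) Z {1..}"
    and distr: "\<And>j x. j \<ge> 1 \<Longrightarrow> measure M {\<omega> \<in> space M. Z j \<omega> \<le> x} = GPD_cdf \<theta>0 x"
    and est_def: "\<And>k \<omega>. \<omega> \<in> space M \<Longrightarrow> \<theta>hat k \<omega> = est k (map (\<lambda>j. Z j \<omega>) [1..<k+1])"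
    and est_meas: "\<And>k. \<theta>hat k \<in> borel_measurable M"
    and est_in: "\<And>k \<omega>. \<omega> \<in> space M \<Longrightarrow> \<theta>hat k \<omega> \<in> \<Theta>"
    and near_min: "\<exists>R :: nat \<Rightarrow> 'a \<Rightarrow> real.
        (\<forall>k. R k \<in> borel_measurable M) \<and> conv_in_prob M R 0 \<and>
        (\<forall>k. \<forall>\<omega>\<in>space M. J_crit Z k \<omega> (\<theta>hat k \<omega>) \<le> J_crit Z k \<omega> \<theta>0 + R k \<omega>)"
  shows "conv_in_prob M \<theta>hat \<theta>0 \<and>
         (\<forall>x\<ge>0. conv_in_prob M (\<lambda>k \<omega>. GPD_surv (\<theta>hat k \<omega>) x) (GPD_surv \<theta>0 x))"
proof -
  interpret prob_space M by (rule M)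
  have t0T: "\<theta>0 \<in> \<Theta>" using \<theta>0_int interior_subset by blast
  have t0: "0 < fst \<theta>0" "fst \<theta>0 < 1" "0 < snd \<theta>0" using t0T \<Theta>_sub by auto
  have Zm: "Z j \<in> borel_measurable M" if "j \<ge> 1" for j
    using indep that unfolding indep_vars_def2 by auto
  obtain R where Rm: "\<And>k. R k \<in> borel_measurable M" and Rc: "conv_in_prob M R 0"
    and RJ: "\<And>k \<omega>. \<omega> \<in> space M \<Longrightarrow> J_crit Z k \<omega> (\<theta>hat k \<omega>) \<le> J_crit Z k \<omega> \<theta>0 + R k \<omega>"
    using near_min by blast
  have part1: "conv_in_prob M \<theta>hat \<theta>0"
    unfolding conv_in_prob_def
  proof (intro allI impI)
    fix \<epsilon> :: real assume e: "0 < \<epsilon>"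
    obtain \<eta> where eta: "0 < \<eta>" and etaH: "\<And>\<theta>. \<theta> \<in> \<Theta> \<Longrightarrow> \<epsilon> \<le> dist \<theta> \<theta>0 \<Longrightarrow> ennreal \<eta> \<le> hdist \<theta> \<theta>0"
      using ident[OF \<Theta>_compact \<Theta>_sub t0T e] by blast
    define A where "A k = {\<omega> \<in> space M. ennreal (\<eta> / 8) \<le> Gk Z \<theta>0 k \<omega>}" for k
    define B where "B k = {\<omega> \<in> space M. \<eta> / 8 < dist (R k \<omega>) 0}" for k
    have Am: "A k \<in> events" for k unfolding A_def using G_meas[OF Zm] by measurable
    have Bm: "B k \<in> events" for k unfolding B_def using Rm by measurable
    have sub: "{\<omega> \<in> space M. dist (\<theta>hat k \<omega>) \<theta>0 > \<epsilon>} \<subseteq> A k \<union> B k" for k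
    proof
      fix \<omega> assume w: "\<omega> \<in> {\<omega> \<in> space M. dist (\<theta>hat k \<omega>) \<theta>0 > \<epsilon>}"
      then have ws: "\<omega> \<in> space M" and d: "\<epsilon> < dist (\<theta>hat k \<omega>) \<theta>0" by auto
      have th: "\<theta>hat k \<omega> \<in> \<Theta>" using est_in[OF ws] .
      have thp: "0 < fst (\<theta>hat k \<omega>)" "fst (\<theta>hat k \<omega>) < 1" "0 < snd (\<theta>hat k \<omega>)" using th \<Theta>_sub by auto
      have "ennreal \<eta> \<le> hdist (\<theta>hat k \<omega>) \<theta>0" using etaH[OF th] d by simp
      also have "\<dots> \<le> ennreal (2 * J_crit Z k \<omega> (\<theta>hat k \<omega>) + 2 * J_crit Z k \<omega> \<theta>0)"
        unfolding hdist_def by (rule stepA[OF thp t0])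
      finally have "\<eta> \<le> 2 * J_crit Z k \<omega> (\<theta>hat k \<omega>) + 2 * J_crit Z k \<omega> \<theta>0"
        using J_nonneg[of Z k \<omega>] by (subst (asm) ennreal_le_iff) (auto intro: add_nonneg_nonneg)
      then have main: "\<eta> \<le> 4 * J_crit Z k \<omega> \<theta>0 + 2 * R k \<omega>" using RJ[OF ws, of k] by simp
      show "\<omega> \<in> A k \<union> B k"
      proof (rule ccontr)
        assume "\<omega> \<notin> A k \<union> B k"
        then have nA: "\<not> ennreal (\<eta> / 8) \<le> Gk Z \<theta>0 k \<omega>" and nB: "\<not> \<eta> / 8 < dist (R k \<omega>) 0"
          using ws by (auto simp: A_def B_def)
        have "Gk Z \<theta>0 k \<omega> = ennreal (J_crit Z k \<omega> \<theta>0)"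
          unfolding Gk_def using J_nn[OF t0, of Z k \<omega>] by simp
        then have "J_crit Z k \<omega> \<theta>0 < \<eta> / 8" using nA ennreal_le_iff[OF J_nonneg[of Z k \<omega> \<theta>0], of "\<eta> / 8"] by simp
        moreover have "R k \<omega> \<le> \<eta> / 8" using nB by (auto simp: dist_real_def)
        ultimately show False using main eta by linarith
      qed
    qed
    have le: "measure M {\<omega> \<in> space M. dist (\<theta>hat k \<omega>) \<theta>0 > \<epsilon>} \<le> measure M (A k) + measure M (B k)" for k
    proof -
      have "measure M {\<omega> \<in> space M. dist (\<theta>hat k \<omega>) \<theta>0 > \<epsilon>} \<le> measure M (A k \<union> B k)"
        using Am Bm by (intro meas_le[OF M sub]) auto
      also have "\<dots> \<le> measure M (A k) + measure M (B k)"
        using Am Bm by (rule measure_Un_le)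
      finally show ?thesis .
    qed
    have "(\<lambda>k. measure M (A k)) \<longlonglongrightarrow> 0"
    proof -
      have "0 < \<eta> / 8" using eta by simp
      note X = G_prob[OF M indep distr t0 this]
      show ?thesis unfolding A_def using X by -
    qed
    moreover have "(\<lambda>k. measure M (B k)) \<longlonglongrightarrow> 0"
    proof -
      have "0 < \<eta> / 8" using eta by simp
      then show ?thesis using Rc unfolding conv_in_prob_def B_def by blast
    qed
    ultimately have "(\<lambda>k. measure M (A k) + measure M (B k)) \<longlonglongrightarrow> 0"
      using tendsto_add by fastforce
    then show "(\<lambda>k. measure M {\<omega> \<in> space M. dist (\<theta>hat k \<omega>) \<theta>0 > \<epsilon>}) \<longlonglongrightarrow> 0"
    proof (rule tendsto_sandwich[of "\<lambda>k. 0", rotated 3])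
      show "\<forall>\<^sub>F k in sequentially. 0 \<le> measure M {\<omega> \<in> space M. dist (\<theta>hat k \<omega>) \<theta>0 > \<epsilon>}"
        by (intro always_eventually allI measure_nonneg)
      show "\<forall>\<^sub>F k in sequentially. measure M {\<omega> \<in> space M. dist (\<theta>hat k \<omega>) \<theta>0 > \<epsilon>} \<le> measure M (A k) + measure M (B k)"
        by (intro always_eventually allI le)
      show "(\<lambda>k. 0::real) \<longlonglongrightarrow> 0" by (rule tendsto_const)
    qed
  qed
  have part2: "conv_in_prob M (\<lambda>k \<omega>. GPD_surv (\<theta>hat k \<omega>) x) (GPD_surv \<theta>0 x)" if x: "0 \<le> x" for x
    unfolding conv_in_prob_def
  proof (intro allI impI)
    fix e :: real assume e: "0 < e"
    have "((\<lambda>\<theta>. GPD_surv \<theta> x) \<longlongrightarrow> GPD_surv \<theta>0 x) (at \<theta>0)"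
      using S_tendsto[of "\<lambda>\<theta>. \<theta>" \<theta>0 "at \<theta>0", OF _ t0(1) t0(3) x] by simp
    then have "\<forall>\<^sub>F \<theta> in at \<theta>0. dist (GPD_surv \<theta> x) (GPD_surv \<theta>0 x) < e"
      using e by (rule tendstoD)
    then obtain d where d: "0 < d" and dH: "\<And>\<theta>. \<theta> \<noteq> \<theta>0 \<Longrightarrow> dist \<theta> \<theta>0 < d \<Longrightarrow> dist (GPD_surv \<theta> x) (GPD_surv \<theta>0 x) < e"
      unfolding eventually_at by auto
    have sub: "{\<omega> \<in> space M. e < dist (GPD_surv (\<theta>hat k \<omega>) x) (GPD_surv \<theta>0 x)} \<subseteq> {\<omega> \<in> space M. d / 2 < dist (\<theta>hat k \<omega>) \<theta>0}" for k
    proof safe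
      fix \<omega> assume "\<omega> \<in> space M" "e < dist (GPD_surv (\<theta>hat k \<omega>) x) (GPD_surv \<theta>0 x)"
      then show "d / 2 < dist (\<theta>hat k \<omega>) \<theta>0"
        using dH[of "\<theta>hat k \<omega>"] d e by (cases "\<theta>hat k \<omega> = \<theta>0") force+
    qed
    have le: "measure M {\<omega> \<in> space M. e < dist (GPD_surv (\<theta>hat k \<omega>) x) (GPD_surv \<theta>0 x)}
        \<le> measure M {\<omega> \<in> space M. d / 2 < dist (\<theta>hat k \<omega>) \<theta>0}" for k
    proof (rule meas_le[OF M sub])
      have [measurable]: "\<theta>hat k \<in> borel_measurable M" by (rule est_meas)
      show "{\<omega> \<in> space M. d / 2 < dist (\<theta>hat k \<omega>) \<theta>0} \<in> sets M" by measurable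
    qed
    have "(\<lambda>k. measure M {\<omega> \<in> space M. d / 2 < dist (\<theta>hat k \<omega>) \<theta>0}) \<longlonglongrightarrow> 0"
    proof -
      have "0 < d / 2" using d by simp
      then show ?thesis using part1 unfolding conv_in_prob_def by blast
    qed
    then show "(\<lambda>k. measure M {\<omega> \<in> space M. e < dist (GPD_surv (\<theta>hat k \<omega>) x) (GPD_surv \<theta>0 x)}) \<longlonglongrightarrow> 0"
    proof (rule tendsto_sandwich[of "\<lambda>k. 0", rotated 3])
      show "\<forall>\<^sub>F k in sequentially. 0 \<le> measure M {\<omega> \<in> space M. e < dist (GPD_surv (\<theta>hat k \<omega>) x) (GPD_surv \<theta>0 x)}"
        by (intro always_eventually allI measure_nonneg)
      show "\<forall>\<^sub>F k in sequentially. measure M {\<omega> \<in> space M. e < dist (GPD_surv (\<theta>hat k \<omega>) x) (GPD_surv \<theta>0 x)} \<le> measure M {\<omega> \<in> space M. d / 2 < dist (\<theta>hat k \<omega>) \<theta>0}"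
        by (intro always_eventually allI le)
      show "(\<lambda>k. 0::real) \<longlonglongrightarrow> 0" by (rule tendsto_const)
    qed
  qed
  show ?thesis using part1 part2 by blast
qed

end
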